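(* Let $P^0,P^1\in\Delta^{n-1}_+$ with $P^0\succ_{P^*}P^1$. Then $P^1\in P^0+\mathbf{Q}(P^0,P^* )$.
   Context: Fix $n\ge 2$ and a positive equilibrium distribution $P^*=(p^*_i)$, $p^*_i>0$, $\sum_i p^*_i=1$. Let $\Delta^{n-1}_+=\{P\in\mathbb{R}^n: p_i>0,\ \sum_i p_i=1\}$. A Markov chain with equilibrium $P^*$ is given by rate constants $q_{ij}\ge 0$ ($i\neq j$) satisfying $\sum_{j\ne i}q_{ij}p^*_j=\bigl(\sum_{j\ne i}q_{ji}\bigr)p^*_i$ for all $i$, with Kolmogorov equation $\frac{dp_i}{dt}=\sum_{j\ne i}(q_{ij}p_j-q_{ji}p_i)$. $P^0\succ^0_{P^*}P^1$ if for some such chain the solution with $P(0)=P^0$ has $P(1)=P^1$; the Markov order $\succ_{P^*}$ is the closed transitive closure of $\succ^0_{P^*}$. For $i\neq j$ let $\gamma^{ji}$ be the vector with $\gamma^{ji}_j=-1$, $\gamma^{ji}_i=1$, other coordinates $0$; ${\rm cone}$ denotes non-negative linear combinations; ${\rm sign}$ is the three-valued sign function; $\mathbf{Q}(P,P^* )={\rm cone}\{\gamma^{ji}\,{\rm sign}(\tfrac{p_j}{p^*_j}-\tfrac{p_i}{p^*_i}) : 1\le j<i\le n\}$. *)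

theory Defs
  imports "HOL-Analysis.Analysis"
begin

text \<open>Distributions are vectors indexed by a finite linearly ordered type 'n
  (the index set {1..n}, n = CARD('n)).\<close>

definition pos_simplex :: "(real^'n) set" where
  "pos_simplex = {P. (\<forall>i. P $ i > 0) \<and> (\<Sum>i\<in>UNIV. P $ i) = 1}"

text \<open>Rate constants q i j (for i \<noteq> j) of a Markov chain with equilibrium Pstar.\<close>
definition markov_rates :: "(real^'n) \<Rightarrow> ('n \<Rightarrow> 'n \<Rightarrow> real) \<Rightarrow> bool" where
  "markov_rates Pstar q \<longleftrightarrow>
     (\<forall>i j. i \<noteq> j \<longrightarrow> q i j \<ge> 0) \<and>
     (\<forall>i. (\<Sum>j\<in>UNIV - {i}. q i j * Pstar $ j) = (\<Sum>j\<in>UNIV - {i}. q j i) * Pstar $ i)"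

definition kolmogorov_rhs :: "('n \<Rightarrow> 'n \<Rightarrow> real) \<Rightarrow> real^'n \<Rightarrow> real^'n" where
  "kolmogorov_rhs q P = (\<chi> i. \<Sum>j\<in>UNIV - {i}. q i j * P $ j - q j i * P $ i)"

definition markov_step :: "(real^'n) \<Rightarrow> real^'n \<Rightarrow> real^'n \<Rightarrow> bool" where
  "markov_step Pstar P0 P1 \<longleftrightarrow>
     (\<exists>q P. markov_rates Pstar q \<and> P 0 = P0 \<and> P 1 = P1 \<and>
        (\<forall>t\<in>{0..1}. (P has_vector_derivative kolmogorov_rhs q (P t)) (at t within {0..1})))"

definition markov_order :: "(real^'n) \<Rightarrow> ((real^'n) \<times> (real^'n)) set" where
  "markov_order Pstar = \<Inter>{R. R \<subseteq> pos_simplex \<times> pos_simplex \<and>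
       {(P0, P1). P0 \<in> pos_simplex \<and> P1 \<in> pos_simplex \<and> markov_step Pstar P0 P1} \<subseteq> R \<and>
       trans R \<and> closedin (top_of_set (pos_simplex \<times> pos_simplex)) R}"

definition gamma :: "'n \<Rightarrow> 'n \<Rightarrow> real^'n" where
  "gamma j i = (\<chi> k. if k = i then 1 else if k = j then -1 else 0)"

definition Qcone :: "real^('n::{finite,linorder}) \<Rightarrow> real^('n::{finite,linorder}) \<Rightarrow> (real^('n::{finite,linorder})) set" where
  "Qcone P Pstar = {x. \<exists>c::_ \<Rightarrow> real. (\<forall>p. c p \<ge> 0) \<and>
      x = (\<Sum>(j,i)\<in>{(j,i). j < i}. c (j,i) *\<^sub>R
              (sgn (P $ j / Pstar $ j - P $ i / Pstar $ i) *\<^sub>R gamma j i))}"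

end

theory Submission
  imports Defs
begin


lemma offdiag_swap:
  fixes f :: "'n::finite \<Rightarrow> 'n \<Rightarrow> real"
  shows "(\<Sum>k\<in>UNIV. \<Sum>j\<in>UNIV-{k}. f k j) = (\<Sum>k\<in>UNIV. \<Sum>j\<in>UNIV-{k}. f j k)"
proof -
  have e: "(\<Sum>j\<in>UNIV-{k}. g j) = (\<Sum>j\<in>UNIV. if j = k then 0 else (g j::real))" for g :: "'n \<Rightarrow> real" and k :: 'n
    by (rule sym, rule sum.mono_neutral_cong_right) auto
  show ?thesis
    apply (simp only: e)
    apply (subst sum.swap)
    apply (rule sum.cong, simp)
    apply (rule sum.cong, auto)
    done
qed

lemma key_ineq:
  fixes ps x h' h :: "'n::finite \<Rightarrow> real" and q :: "'n \<Rightarrow> 'n \<Rightarrow> real"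
    and H H' :: "real \<Rightarrow> real"
  assumes q: "\<forall>i j. i \<noteq> j \<longrightarrow> q i j \<ge> 0"
    and bal: "\<forall>i. (\<Sum>j\<in>UNIV-{i}. q i j * ps j) = (\<Sum>j\<in>UNIV-{i}. q j i) * ps i"
    and ps: "\<forall>k. ps k > 0"
    and cvx: "\<forall>u v. H v \<ge> H u + H' u * (v - u)"
  shows "(\<Sum>k\<in>UNIV. H' (x k) * (\<Sum>j\<in>UNIV-{k}. q k j * (ps j * x j) - q j k * (ps k * x k))) \<le> 0"
proof -
  define A where "A = (\<Sum>k\<in>UNIV. \<Sum>j\<in>UNIV-{k}. q k j * ps j * x j * H' (x k))"
  define B where "B = (\<Sum>k\<in>UNIV. \<Sum>j\<in>UNIV-{k}. q k j * ps j * x j * H' (x j))"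
  have zero: "(\<Sum>k\<in>UNIV. \<Sum>j\<in>UNIV-{k}. q k j * ps j * g (x k)) =
              (\<Sum>k\<in>UNIV. \<Sum>j\<in>UNIV-{k}. q k j * ps j * g (x j))" for g :: "real \<Rightarrow> real"
  proof -
    have "(\<Sum>k\<in>UNIV. \<Sum>j\<in>UNIV-{k}. q k j * ps j * g (x k)) =
          (\<Sum>k\<in>UNIV. (\<Sum>j\<in>UNIV-{k}. q k j * ps j) * g (x k))"
      by (simp add: sum_distrib_right)
    also have "\<dots> = (\<Sum>k\<in>UNIV. (\<Sum>j\<in>UNIV-{k}. q j k) * ps k * g (x k))"
      using bal by simp
    also have "\<dots> = (\<Sum>k\<in>UNIV. \<Sum>j\<in>UNIV-{k}. q j k * ps k * g (x k))"
      by (simp add: sum_distrib_right)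
    also have "\<dots> = (\<Sum>k\<in>UNIV. \<Sum>j\<in>UNIV-{k}. q k j * ps j * g (x j))"
      by (rule offdiag_swap)
    finally show ?thesis .
  qed
  have LHS: "(\<Sum>k\<in>UNIV. H' (x k) * (\<Sum>j\<in>UNIV-{k}. q k j * (ps j * x j) - q j k * (ps k * x k))) = A - B"
  proof -
    have "(\<Sum>k\<in>UNIV. H' (x k) * (\<Sum>j\<in>UNIV-{k}. q k j * (ps j * x j) - q j k * (ps k * x k)))
       = A - (\<Sum>k\<in>UNIV. \<Sum>j\<in>UNIV-{k}. q j k * ps k * x k * H' (x k))"
      unfolding A_def
      by (simp add: sum_distrib_left sum_subtractf algebra_simps)
    also have "(\<Sum>k\<in>UNIV. \<Sum>j\<in>UNIV-{k}. q j k * ps k * x k * H' (x k)) = B"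
      unfolding B_def by (rule offdiag_swap)
    finally show ?thesis .
  qed
  have RHS: "A - B = (\<Sum>k\<in>UNIV. \<Sum>j\<in>UNIV-{k}. q k j * ps j * (H (x k) - H (x j) + H' (x k) * (x j - x k)))"
  proof -
    have z: "(\<Sum>k\<in>UNIV. \<Sum>j\<in>UNIV-{k}. q k j * ps j * (H (x k) - x k * H' (x k))) =
              (\<Sum>k\<in>UNIV. \<Sum>j\<in>UNIV-{k}. q k j * ps j * (H (x j) - x j * H' (x j)))"
      by (rule zero)
    have "(\<Sum>k\<in>UNIV. \<Sum>j\<in>UNIV-{k}. q k j * ps j * (H (x k) - H (x j) + H' (x k) * (x j - x k)))
      = A + (\<Sum>k\<in>UNIV. \<Sum>j\<in>UNIV-{k}. q k j * ps j * (H (x k) - x k * H' (x k)))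
          - (\<Sum>k\<in>UNIV. \<Sum>j\<in>UNIV-{k}. q k j * ps j * H (x j))"
      unfolding A_def
      by (simp add: sum.distrib[symmetric] sum_subtractf[symmetric] algebra_simps)
    also have "\<dots> = A + (\<Sum>k\<in>UNIV. \<Sum>j\<in>UNIV-{k}. q k j * ps j * (H (x j) - x j * H' (x j)))
          - (\<Sum>k\<in>UNIV. \<Sum>j\<in>UNIV-{k}. q k j * ps j * H (x j))"
      using z by simp
    also have "\<dots> = A - B"
      unfolding B_def
      by (simp add: sum.distrib[symmetric] sum_subtractf[symmetric] algebra_simps)
    finally show ?thesis by simp
  qed
  have "(\<Sum>k\<in>UNIV. \<Sum>j\<in>UNIV-{k}. q k j * ps j * (H (x k) - H (x j) + H' (x k) * (x j - x k))) \<le> 0"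
  proof (rule sum_nonpos, rule sum_nonpos)
    fix k j :: 'n assume "j \<in> UNIV - {k}"
    hence "q k j * ps j \<ge> 0" using q ps by (simp add: less_imp_le)
    moreover have "H (x k) - H (x j) + H' (x k) * (x j - x k) \<le> 0" using cvx[rule_format, of "x k" "x j"] by simp
    ultimately show "q k j * ps j * (H (x k) - H (x j) + H' (x k) * (x j - x k)) \<le> 0"
      by (simp add: mult_nonneg_nonpos)
  qed
  thus ?thesis using LHS RHS by simp
qed



lemma ode_mono:
  fixes Pstar :: "real^'n" and P :: "real \<Rightarrow> real^'n" and H H' :: "real \<Rightarrow> real"
  assumes ps: "\<forall>k. Pstar$k > 0" and mr: "markov_rates Pstar q"
    and der: "\<forall>t\<in>{0..1}. (P has_vector_derivative kolmogorov_rhs q (P t)) (at t within {0..1})"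
    and hd: "\<forall>u. (H has_real_derivative H' u) (at u)"
    and cvx: "\<forall>u v. H v \<ge> H u + H' u * (v - u)"
  shows "(\<Sum>k\<in>UNIV. Pstar$k * H (P 1 $ k / Pstar$k)) \<le> (\<Sum>k\<in>UNIV. Pstar$k * H (P 0 $ k / Pstar$k))"
proof -
  define F where "F t = (\<Sum>k\<in>UNIV. Pstar$k * H (P t $ k / Pstar$k))" for t
  define F' where "F' t = (\<Sum>k\<in>UNIV. Pstar$k * (H' (P t $ k / Pstar$k) * (kolmogorov_rhs q (P t) $ k / Pstar$k)))" for t
  have dF: "(F has_real_derivative F' t) (at t within {0..1})" if t: "t \<in> {0..1}" for t
  proof -
    have c: "((\<lambda>s. P s $ k) has_real_derivative kolmogorov_rhs q (P t) $ k) (at t within {0..1})" for k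
      using bounded_linear.has_vector_derivative[OF bounded_linear_vec_nth der[rule_format, OF t]]
      by (simp add: has_real_derivative_iff_has_vector_derivative)
    have c2: "((\<lambda>s. P s $ k / Pstar$k) has_real_derivative kolmogorov_rhs q (P t) $ k / Pstar$k) (at t within {0..1})" for k
      using DERIV_cdivide[OF c] by simp
    have c3: "((\<lambda>s. Pstar$k * H (P s $ k / Pstar$k)) has_real_derivative
          Pstar$k * (H' (P t $ k / Pstar$k) * (kolmogorov_rhs q (P t) $ k / Pstar$k))) (at t within {0..1})" for k
      by (rule DERIV_cmult[OF DERIV_chain2[OF hd[rule_format] c2]])
    show ?thesis unfolding F_def F'_def
      by (rule DERIV_sum, rule c3)
  qed
  have F'le: "F' t \<le> 0" for t
  proof -
    define x where "x k = P t $ k / Pstar$k" for k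
    have px: "P t $ k = Pstar$k * x k" for k using ps unfolding x_def
      by (metis less_irrefl nonzero_mult_div_cancel_left times_divide_eq_right)
    have "F' t = (\<Sum>k\<in>UNIV. H' (x k) * (\<Sum>j\<in>UNIV-{k}. q k j * (Pstar$j * x j) - q j k * (Pstar$k * x k)))"
      unfolding F'_def kolmogorov_rhs_def using ps
      by (simp add: x_def[symmetric] px less_imp_neq[symmetric])
    also have "\<dots> \<le> 0"
      by (rule key_ineq[where ps="\<lambda>k. Pstar$k"]) (use mr ps cvx in \<open>auto simp: markov_rates_def\<close>)
    finally show ?thesis .
  qed
  have cont: "continuous_on {0..1} F"
    unfolding continuous_on_eq_continuous_within
    using dF DERIV_continuous by blast
  have "F 1 \<le> F 0"
  proof (rule DERIV_nonpos_imp_decreasing_open[of 0 1 F])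
    fix s :: real assume "0 < s" "s < 1"
    hence "at s within {0..1} = at s" by (simp add: at_within_Icc_at)
    thus "\<exists>y. (F has_real_derivative y) (at s) \<and> y \<le> 0"
      using dF[of s] F'le \<open>0 < s\<close> \<open>s < 1\<close> by auto
  qed (use cont in auto)
  thus ?thesis unfolding F_def .
qed



definition Dt :: "real \<Rightarrow> real^'n \<Rightarrow> real^'n \<Rightarrow> real" where
  "Dt t Pstar P = (\<Sum>k\<in>UNIV. Pstar$k * max (P$k / Pstar$k - t) 0)"

lemma inv_eq: "(1 + inverse (r::real) / 2 * (2 * a)) / 2 = (1 + a / r) / 2"
  by (simp add: inverse_eq_divide)

lemma smooth_deriv:
  assumes e: "e > 0"
  shows "((\<lambda>u. ((u - t) + sqrt ((u - t)^2 + e)) / 2) has_real_derivative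
           (1 + (u - t) / sqrt ((u - t)^2 + e)) / 2) (at u)"
proof -
  have pos: "(u - t)^2 + e > 0" using e by (simp add: add_nonneg_pos)
  have d1: "((\<lambda>u. (u - t)^2 + e) has_real_derivative 2 * (u - t)) (at u)"
    by (auto intro!: derivative_eq_intros)
  have d2: "((\<lambda>u. sqrt ((u - t)^2 + e)) has_real_derivative
      inverse (sqrt ((u - t)^2 + e)) / 2 * (2 * (u - t))) (at u)"
    by (rule DERIV_chain2[OF DERIV_real_sqrt[OF pos] d1])
  have d0: "((\<lambda>u. u - t) has_real_derivative 1) (at u)"
    by (auto intro!: derivative_eq_intros)
  have d3: "((\<lambda>u. (u - t) + sqrt ((u - t)^2 + e)) has_real_derivative
      1 + inverse (sqrt ((u - t)^2 + e)) / 2 * (2 * (u - t))) (at u)"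
    by (rule DERIV_add[OF d0 d2])
  have eq: "(1 + inverse (sqrt ((u - t)^2 + e)) / 2 * (2 * (u - t))) / 2 = (1 + (u - t) / sqrt ((u - t)^2 + e)) / 2"
    by (rule inv_eq)
  show ?thesis
    using DERIV_cdivide[OF d3, of 2, unfolded eq] .
qed

lemma cvx_ab:
  fixes a b e :: real
  assumes e: "e > 0"
  shows "(b + sqrt (b^2 + e)) / 2 \<ge> (a + sqrt (a^2 + e)) / 2 + (1 + a / sqrt (a^2 + e)) / 2 * (b - a)"
proof -
  define r where "r = sqrt (a^2 + e)"
  define s where "s = sqrt (b^2 + e)"
  have r0: "r > 0" unfolding r_def using e by (simp add: add_nonneg_pos)
  have "(a*b + e)^2 \<le> (a^2 + e) * (b^2 + e)"
  proof -
    have "0 \<le> e * (a - b)^2" using e by simp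
    thus ?thesis by (simp add: power2_eq_square algebra_simps)
  qed
  hence "sqrt ((a*b + e)^2) \<le> sqrt ((a^2 + e) * (b^2 + e))" by (rule real_sqrt_le_mono)
  hence "\<bar>a*b + e\<bar> \<le> r * s" unfolding r_def s_def by (simp add: real_sqrt_mult)
  hence rs: "a*b + e \<le> r * s" by linarith
  have rr: "r * r = a^2 + e" unfolding r_def using e
    by (simp add: add_nonneg_nonneg less_imp_le)
  have "r * (r + a * (b - a) / r) = r*r + a*(b-a)" using r0 by (simp add: distrib_left)
  also have "\<dots> = a*b + e" using rr by (simp add: power2_eq_square algebra_simps)
  also have "\<dots> \<le> r * s" by (rule rs)
  finally have "r + a * (b - a) / r \<le> s" using r0 by (simp add: mult_le_cancel_left_pos)
  moreover have "(a + r)/2 + (1 + a/r)/2 * (b - a) = (b + (r + a * (b - a) / r)) / 2"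
    by (simp add: algebra_simps add_divide_distrib diff_divide_distrib)
  ultimately have "(a + r)/2 + (1 + a/r)/2 * (b - a) \<le> (b + s)/2" by simp
  thus ?thesis unfolding r_def s_def .
qed

lemma smooth_cvx:
  assumes e: "e > 0"
  shows "((v - t) + sqrt ((v - t)^2 + e)) / 2 \<ge>
         ((u - t) + sqrt ((u - t)^2 + e)) / 2 + (1 + (u - t) / sqrt ((u - t)^2 + e)) / 2 * (v - u)"
proof -
  have "v - t - (u - t) = v - u" by simp
  thus ?thesis using cvx_ab[OF e, of "u - t" "v - t"] by (simp only:)
qed

lemma smooth_bounds:
  assumes e: "e > 0"
  shows "max (u - t) 0 \<le> ((u - t) + sqrt ((u - t)^2 + e)) / 2"
    and "((u - t) + sqrt ((u - t)^2 + e)) / 2 \<le> max (u - t) 0 + sqrt e / 2"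
proof -
  have l: "\<bar>u - t\<bar> \<le> sqrt ((u - t)^2 + e)"
  proof -
    have "(u-t)^2 \<le> (u-t)^2 + e" using e by simp
    hence "sqrt ((u-t)^2) \<le> sqrt ((u-t)^2 + e)" by (rule real_sqrt_le_mono)
    thus ?thesis by simp
  qed
  have u: "sqrt ((u - t)^2 + e) \<le> \<bar>u - t\<bar> + sqrt e"
    using sqrt_add_le_add_sqrt[of "(u-t)^2" e] e by simp
  show "max (u - t) 0 \<le> ((u - t) + sqrt ((u - t)^2 + e)) / 2" using l unfolding max_def by (auto simp: abs_if split: if_splits)
  show "((u - t) + sqrt ((u - t)^2 + e)) / 2 \<le> max (u - t) 0 + sqrt e / 2" using u unfolding max_def by (auto simp: abs_if split: if_splits)
qed


lemma step_Dt:
  fixes Pstar P0 P1 :: "real^'n"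
  assumes ps: "\<forall>k. Pstar$k > 0" and sps: "(\<Sum>k\<in>UNIV. Pstar$k) = 1"
    and st: "markov_step Pstar P0 P1"
  shows "Dt t Pstar P1 \<le> Dt t Pstar P0"
proof -
  obtain q P where mr: "markov_rates Pstar q" and P0: "P 0 = P0" and P1: "P 1 = P1"
    and der: "\<forall>t\<in>{0..1}. (P has_vector_derivative kolmogorov_rhs q (P t)) (at t within {0..1})"
    using st unfolding markov_step_def by blast
  show ?thesis
  proof (rule field_le_epsilon)
    fix d :: real assume d: "d > 0"
    define e where "e = (2*d)^2"
    have e: "e > 0" unfolding e_def using d by simp
    have se: "sqrt e / 2 = d" unfolding e_def using d by (simp only: real_sqrt_abs)
    define H where "H u = ((u - t) + sqrt ((u - t)^2 + e)) / 2" for u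
    define H' where "H' u = (1 + (u - t) / sqrt ((u - t)^2 + e)) / 2" for u
    have hd: "\<forall>u. (H has_real_derivative H' u) (at u)"
      unfolding H_def[abs_def] H'_def using smooth_deriv[OF e] by blast
    have cvx: "\<forall>u v. H v \<ge> H u + H' u * (v - u)"
      unfolding H_def H'_def using smooth_cvx[OF e] by blast
    have m: "(\<Sum>k\<in>UNIV. Pstar$k * H (P 1 $ k / Pstar$k)) \<le> (\<Sum>k\<in>UNIV. Pstar$k * H (P 0 $ k / Pstar$k))"
      by (rule ode_mono[OF ps mr der hd cvx])
    have "Dt t Pstar P1 \<le> (\<Sum>k\<in>UNIV. Pstar$k * H (P 1 $ k / Pstar$k))"
      unfolding Dt_def P1 H_def
      by (rule sum_mono, rule mult_left_mono) (use smooth_bounds(1)[OF e] ps in \<open>auto simp: less_imp_le\<close>)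
    also have "\<dots> \<le> (\<Sum>k\<in>UNIV. Pstar$k * H (P 0 $ k / Pstar$k))" by (rule m)
    also have "\<dots> \<le> (\<Sum>k\<in>UNIV. Pstar$k * (max (P0 $ k / Pstar$k - t) 0 + d))"
      unfolding P0 H_def
      by (rule sum_mono, rule mult_left_mono) (use smooth_bounds(2)[OF e] ps se in \<open>auto simp: less_imp_le\<close>)
    also have "\<dots> = Dt t Pstar P0 + d"
      unfolding Dt_def by (simp add: distrib_left sum.distrib sum_distrib_right[symmetric] sps)
    finally show "Dt t Pstar P1 \<le> Dt t Pstar P0 + d" .
  qed
qed



definition Kc :: "(('n::{finite,linorder}) \<Rightarrow> real) \<Rightarrow> (real^('n::{finite,linorder})) set" where
  "Kc x = {y. \<exists>c::_ \<Rightarrow> real. (\<forall>p. c p \<ge> 0) \<and>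
      y = (\<Sum>(j,i)\<in>{(j,i). j < i}. c (j,i) *\<^sub>R (sgn (x j - x i) *\<^sub>R gamma j i))}"

lemma Qcone_Kc: "Qcone P Pstar = Kc (\<lambda>k. P$k / Pstar$k)"
  unfolding Qcone_def Kc_def by simp

lemma Kc_0: "0 \<in> Kc x"
  unfolding Kc_def by (rule CollectI, rule exI[of _ "\<lambda>_. 0"]) simp

definition Fg :: "(('n::{finite,linorder}) \<Rightarrow> real) \<Rightarrow> 'n \<times> 'n \<Rightarrow> real^('n::{finite,linorder})" where
  "Fg x p = sgn (x (fst p) - x (snd p)) *\<^sub>R gamma (fst p) (snd p)"

lemma Kc_alt: "Kc x = {y. \<exists>c::_ \<Rightarrow> real. (\<forall>p. c p \<ge> 0) \<and> y = (\<Sum>p\<in>{(j,i). j < i}. c p *\<^sub>R Fg x p)}"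
  unfolding Kc_def Fg_def split_def by simp

lemma Kc_add:
  assumes "y1 \<in> Kc x" "y2 \<in> Kc x" shows "y1 + y2 \<in> Kc x"
proof -
  obtain c1 where c1: "\<forall>p. c1 p \<ge> 0" "y1 = (\<Sum>p\<in>{(j,i). j < i}. c1 p *\<^sub>R Fg x p)"
    using assms(1) unfolding Kc_alt mem_Collect_eq by (elim exE conjE) (rule that)
  obtain c2 where c2: "\<forall>p. c2 p \<ge> 0" "y2 = (\<Sum>p\<in>{(j,i). j < i}. c2 p *\<^sub>R Fg x p)"
    using assms(2) unfolding Kc_alt mem_Collect_eq by (elim exE conjE) (rule that)
  have "y1 + y2 = (\<Sum>p\<in>{(j,i). j < i}. c1 p *\<^sub>R Fg x p + c2 p *\<^sub>R Fg x p)"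
    unfolding c1(2) c2(2) by (rule sum.distrib[symmetric])
  also have "\<dots> = (\<Sum>p\<in>{(j,i). j < i}. (c1 p + c2 p) *\<^sub>R Fg x p)"
    by (simp only: scaleR_add_left)
  finally have "y1 + y2 = (\<Sum>p\<in>{(j,i). j < i}. (\<lambda>p. c1 p + c2 p) p *\<^sub>R Fg x p)" .
  moreover have "\<forall>p. (\<lambda>p. c1 p + c2 p) p \<ge> 0" using c1(1) c2(1) by (simp add: add_nonneg_nonneg)
  ultimately show ?thesis unfolding Kc_alt by (intro CollectI exI[of _ "\<lambda>p. c1 p + c2 p"] conjI)
qed

lemma gamma_comp: "a \<noteq> b \<Longrightarrow> gamma a b $ k = (if k = b then 1 else 0) - (if k = a then 1 else 0)"
  unfolding gamma_def by auto

lemma gamma_swap: "a \<noteq> b \<Longrightarrow> gamma b a = - gamma a b"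
  by (simp add: vec_eq_iff gamma_comp)

lemma Kc_single:
  fixes x :: "'n::{finite,linorder} \<Rightarrow> real"
  assumes "j < i" "d \<ge> 0"
  shows "d *\<^sub>R (sgn (x j - x i) *\<^sub>R gamma j i) \<in> Kc x"
proof -
  define c where "c p = (if p = (j,i) then d else 0)" for p
  have "(\<Sum>(j',i')\<in>{(j,i). j < i}. c (j',i') *\<^sub>R (sgn (x j' - x i') *\<^sub>R gamma j' i'))
     = (\<Sum>p\<in>{(j,i). j < i}. if p = (j,i) then d *\<^sub>R (sgn (x j - x i) *\<^sub>R gamma j i) else 0)"
  proof (rule sum.cong[OF refl])
    fix p :: "'n \<times> 'n"
    obtain a b where p: "p = (a,b)" by (cases p)
    show "(case p of (j',i') \<Rightarrow> c (j',i') *\<^sub>R (sgn (x j' - x i') *\<^sub>R gamma j' i')) =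
       (if p = (j,i) then d *\<^sub>R (sgn (x j - x i) *\<^sub>R gamma j i) else 0)"
    proof (cases "p = (j,i)")
      case True thus ?thesis by (simp add: c_def)
    next
      case False
      hence "c (a,b) = 0" unfolding c_def using p by auto
      thus ?thesis using False by (auto simp: p)
    qed
  qed
  also have "\<dots> = d *\<^sub>R (sgn (x j - x i) *\<^sub>R gamma j i)"
    using assms(1) by (simp add: sum.delta)
  finally have eq: "(\<Sum>(j',i')\<in>{(j,i). j < i}. c (j',i') *\<^sub>R (sgn (x j' - x i') *\<^sub>R gamma j' i')) = d *\<^sub>R (sgn (x j - x i) *\<^sub>R gamma j i)" .
  have c0: "\<forall>p. c p \<ge> 0" using assms(2) by (simp add: c_def)
  show ?thesis unfolding Kc_def
    by (rule CollectI, rule exI[of _ c], rule conjI[OF c0], rule eq[symmetric])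
qed

lemma Kc_gen:
  fixes x :: "'n::{finite,linorder} \<Rightarrow> real"
  assumes "x b < x a" "d \<ge> 0"
  shows "d *\<^sub>R gamma a b \<in> Kc x"
proof -
  have ab: "a \<noteq> b" using assms(1) by auto
  show ?thesis
  proof (cases "a < b")
    case True
    have "sgn (x a - x b) = 1" using assms(1) by simp
    hence "d *\<^sub>R (sgn (x a - x b) *\<^sub>R gamma a b) = d *\<^sub>R gamma a b" by (simp only: scaleR_one)
    thus ?thesis using Kc_single[OF True assms(2), of x] by (simp only:)
  next
    case False
    hence ba: "b < a" using ab by simp
    have "sgn (x b - x a) = -1" using assms(1) by simp
    hence "d *\<^sub>R (sgn (x b - x a) *\<^sub>R gamma b a) = d *\<^sub>R gamma a b"
      using gamma_swap[OF ab] by simp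
    thus ?thesis using Kc_single[OF ba assms(2), of x] by (simp only:)
  qed
qed

definition upcl :: "('n \<Rightarrow> real) \<Rightarrow> 'n set \<Rightarrow> bool" where
  "upcl x S \<longleftrightarrow> (\<forall>a b. b \<in> S \<longrightarrow> x b < x a \<longrightarrow> a \<in> S)"

lemma gamma_sum:
  fixes S :: "'n::{finite,linorder} set"
  assumes "a \<noteq> b"
  shows "(\<Sum>k\<in>S. gamma a b $ k) = (if b \<in> S then 1 else 0) - (if a \<in> S then 1 else 0)"
  using assms by (simp add: gamma_comp sum_subtractf sum.delta)

lemma comb:
  fixes x :: "'n::{finite,linorder} \<Rightarrow> real" and y :: "real^('n::{finite,linorder})"
  shows "(\<Sum>k\<in>UNIV. y$k) = 0 \<Longrightarrow> (\<forall>S. upcl x S \<longrightarrow> (\<Sum>k\<in>S. y$k) \<le> 0) \<Longrightarrow> y \<in> Kc x"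
proof (induction "card {k. y$k \<noteq> 0}" arbitrary: y rule: less_induct)
  case less
  note s0 = less.prems(1) and cond = less.prems(2)
  show ?case
  proof (cases "y = 0")
    case True thus ?thesis using Kc_0 by simp
  next
    case False
    have "\<exists>b. y$b > 0"
    proof (rule ccontr)
      assume "\<not> ?thesis"
      hence "\<forall>k. y$k \<le> 0" by (simp add: not_less)
      hence "\<forall>k\<in>UNIV. - (y$k) \<ge> 0" by simp
      moreover have "(\<Sum>k\<in>UNIV. - (y$k)) = 0" using s0 by (simp add: sum_negf)
      ultimately have "\<forall>k\<in>UNIV. - (y$k) = 0" using sum_nonneg_eq_0_iff[of UNIV "\<lambda>k. - (y$k)"] by simp
      hence "y = 0" by (simp add: vec_eq_iff)
      thus False using False by simp
    qed
    define Bs where "Bs = {k. y$k > 0}"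
    have Bne: "Bs \<noteq> {}" using \<open>\<exists>b. y$b > 0\<close> unfolding Bs_def by blast
    have "Max (x ` Bs) \<in> x ` Bs" by (rule Max_in) (use Bne in auto)
    then obtain b where b: "b \<in> Bs" "x b = Max (x ` Bs)" by auto
    have bmax: "\<And>k. y$k > 0 \<Longrightarrow> x k \<le> x b"
      using b(2) Bs_def by (simp add: Max_ge)
    have yb: "y$b > 0" using b(1) Bs_def by simp
    define U where "U = {k. x b < x k}"
    define T where "T = {k. x k = x b \<and> y$k > 0}"
    have "upcl x (U \<union> T)" unfolding upcl_def U_def T_def by auto
    hence "(\<Sum>k\<in>U \<union> T. y$k) \<le> 0" by (rule cond[rule_format])
    moreover have "(\<Sum>k\<in>U \<union> T. y$k) = (\<Sum>k\<in>U. y$k) + (\<Sum>k\<in>T. y$k)"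
      by (rule sum.union_disjoint) (auto simp: U_def T_def)
    moreover have "(\<Sum>k\<in>T. y$k) \<ge> y$b"
      by (rule member_le_sum) (auto simp: T_def yb less_imp_le)
    ultimately have "(\<Sum>k\<in>U. y$k) < 0" using yb by linarith
    then obtain a where a: "x b < x a" "y$a < 0"
    proof -
      assume r: "\<And>a. x b < x a \<Longrightarrow> y $ a < 0 \<Longrightarrow> thesis"
      show thesis
      proof (rule ccontr)
        assume "\<not> thesis"
        hence "\<forall>k\<in>U. y$k \<ge> 0" using r unfolding U_def by force
        hence "(\<Sum>k\<in>U. y$k) \<ge> 0" by (simp add: sum_nonneg)
        thus False using \<open>(\<Sum>k\<in>U. y$k) < 0\<close> by simp
      qed
    qed
    have ab: "a \<noteq> b" using a(1) by auto
    define d where "d = min (y$b) (- (y$a))"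
    have d0: "d > 0" unfolding d_def using yb a(2) by simp
    define y' where "y' = y - d *\<^sub>R gamma a b"
    have y'k: "y'$k = y$k - d * ((if k = b then 1 else 0) - (if k = a then 1 else 0))" for k
      unfolding y'_def using ab by (simp add: gamma_comp)
    have y'S: "(\<Sum>k\<in>S. y'$k) = (\<Sum>k\<in>S. y$k) - d * ((if b \<in> S then 1 else 0) - (if a \<in> S then 1 else 0))" for S
      unfolding y'_def using gamma_sum[OF ab, of S] by (simp add: sum_subtractf sum_distrib_left[symmetric])
    have s0': "(\<Sum>k\<in>UNIV. y'$k) = 0" using y'S[of UNIV] s0 by simp
    have cond': "\<forall>S. upcl x S \<longrightarrow> (\<Sum>k\<in>S. y'$k) \<le> 0"
    proof (intro allI impI)
      fix S assume uS: "upcl x S"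
      have sS: "(\<Sum>k\<in>S. y$k) \<le> 0" by (rule cond[rule_format, OF uS])
      show "(\<Sum>k\<in>S. y'$k) \<le> 0"
      proof (cases "a \<in> S \<and> b \<notin> S")
        case False
        have "b \<in> S \<Longrightarrow> a \<in> S" using uS a(1) unfolding upcl_def by simp
        hence "(a \<in> S) = (b \<in> S)" using False by blast
        thus ?thesis using y'S[of S] sS False by auto
      next
        case True
        have "(\<Sum>k\<in>S. y$k) \<le> - d"
        proof (cases "\<exists>c\<in>S. y$c > 0")
          case False
          hence "\<forall>k\<in>S - {a}. y$k \<le> 0" by (auto simp: not_less)
          hence "(\<Sum>k\<in>S - {a}. y$k) \<le> 0" by (intro sum_nonpos) simp
          moreover have "(\<Sum>k\<in>S. y$k) = y$a + (\<Sum>k\<in>S - {a}. y$k)"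
            using True by (simp add: sum.remove)
          ultimately show ?thesis unfolding d_def by linarith
        next
          case True2: True
          then obtain c where c: "c \<in> S" "y$c > 0" by blast
          have "x c \<le> x b" using bmax c(2) by simp
          moreover have "\<not> x c < x b" using uS c(1) True unfolding upcl_def by auto
          ultimately have xc: "x c = x b" by simp
          have US: "U \<subseteq> S" using uS c(1) xc unfolding upcl_def U_def by auto
          define S2 where "S2 = S \<union> T"
          have "upcl x S2" unfolding upcl_def S2_def
          proof (intro allI impI)
            fix a' b' assume "b' \<in> S \<union> T" "x b' < x a'"
            thus "a' \<in> S \<union> T"
              using uS US unfolding upcl_def T_def U_def by auto
          qed
          hence "(\<Sum>k\<in>S2. y$k) \<le> 0" by (rule cond[rule_format])
          moreover have "(\<Sum>k\<in>S2. y$k) = (\<Sum>k\<in>S. y$k) + (\<Sum>k\<in>T - S. y$k)"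
          proof -
            have "S2 = S \<union> (T - S)" unfolding S2_def by auto
            moreover have "(\<Sum>k\<in>S \<union> (T - S). y$k) = (\<Sum>k\<in>S. y$k) + (\<Sum>k\<in>T - S. y$k)"
              by (rule sum.union_disjoint) auto
            ultimately show ?thesis by simp
          qed
          moreover have "(\<Sum>k\<in>T - S. y$k) \<ge> y$b"
            by (rule member_le_sum) (use True yb in \<open>auto simp: T_def less_imp_le\<close>)
          ultimately show ?thesis unfolding d_def by linarith
        qed
        thus ?thesis using y'S[of S] True by simp
      qed
    qed
    have sub: "{k. y'$k \<noteq> 0} \<subset> {k. y$k \<noteq> 0}"
    proof
      show "{k. y'$k \<noteq> 0} \<subseteq> {k. y$k \<noteq> 0}"
        using y'k yb a(2) by auto
      show "{k. y'$k \<noteq> 0} \<noteq> {k. y$k \<noteq> 0}"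
      proof (cases "d = y$b")
        case True
        hence "y'$b = 0" using y'k[of b] ab by simp
        hence "b \<notin> {k. y'$k \<noteq> 0}" by simp
        moreover have "b \<in> {k. y$k \<noteq> 0}" using yb by simp
        ultimately show ?thesis by blast
      next
        case False
        hence "d = - (y$a)" unfolding d_def by (simp add: min_def split: if_splits)
        hence "y'$a = 0" using y'k[of a] ab by simp
        hence "a \<notin> {k. y'$k \<noteq> 0}" by simp
        moreover have "a \<in> {k. y$k \<noteq> 0}" using a(2) by simp
        ultimately show ?thesis by blast
      qed
    qed
    have "card {k. y'$k \<noteq> 0} < card {k. y$k \<noteq> 0}"
      by (rule psubset_card_mono[OF _ sub]) simp
    hence "y' \<in> Kc x" by (rule less.hyps[OF _ s0' cond'])
    moreover have "d *\<^sub>R gamma a b \<in> Kc x" using Kc_gen[OF a(1)] d0 by simp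
    ultimately have "y' + d *\<^sub>R gamma a b \<in> Kc x" by (rule Kc_add)
    thus ?thesis unfolding y'_def by simp
  qed
qed



lemma order_Dt:
  fixes Pstar P0 P1 :: "real^'n::{finite,linorder}"
  assumes ps: "Pstar \<in> pos_simplex" and o: "(P0, P1) \<in> markov_order Pstar"
  shows "Dt t Pstar P1 \<le> Dt t Pstar P0"
proof -
  have psp: "\<forall>k. Pstar$k > 0" and sps: "(\<Sum>k\<in>UNIV. Pstar$k) = 1"
    using ps unfolding pos_simplex_def by auto
  define R where "R = {(A,B). A \<in> pos_simplex \<and> B \<in> pos_simplex \<and> Dt t Pstar B \<le> Dt t Pstar A}"
  have cD: "continuous_on UNIV (\<lambda>v. Dt t Pstar v)"
    unfolding Dt_def by (intro continuous_intros) (use psp in \<open>auto simp: less_imp_neq[symmetric]\<close>)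
  have c1: "continuous_on UNIV (\<lambda>p::(real^('n::{finite,linorder})) \<times> (real^('n::{finite,linorder})). Dt t Pstar (snd p))"
    by (rule continuous_on_compose2[OF cD continuous_on_snd]) auto
  have c2: "continuous_on UNIV (\<lambda>p::(real^('n::{finite,linorder})) \<times> (real^('n::{finite,linorder})). Dt t Pstar (fst p))"
    by (rule continuous_on_compose2[OF cD continuous_on_fst]) auto
  have cl: "closed {p::(real^('n::{finite,linorder})) \<times> (real^('n::{finite,linorder})). Dt t Pstar (snd p) \<le> Dt t Pstar (fst p)}"
    by (rule closed_Collect_le[OF c1 c2])
  have "R = (pos_simplex \<times> pos_simplex) \<inter> {p. Dt t Pstar (snd p) \<le> Dt t Pstar (fst p)}"
    unfolding R_def by auto
  hence clR: "closedin (top_of_set (pos_simplex \<times> pos_simplex)) R"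
    using closedin_closed_Int[OF cl] by simp
  have trR: "trans R" unfolding R_def trans_def by auto
  have stR: "{(P0, P1). P0 \<in> pos_simplex \<and> P1 \<in> pos_simplex \<and> markov_step Pstar P0 P1} \<subseteq> R"
    unfolding R_def using step_Dt[OF psp sps] by auto
  have subR: "R \<subseteq> pos_simplex \<times> pos_simplex" unfolding R_def by auto
  have "markov_order Pstar \<subseteq> R"
    unfolding markov_order_def by (rule Inter_lower) (use clR trR stR subR in blast)
  thus ?thesis using o unfolding R_def by auto
qed


theorem corollary3:
  fixes Pstar P0 P1 :: "real^'n::{finite,linorder}"
  assumes "CARD('n) \<ge> 2"
    and "Pstar \<in> pos_simplex"
    and "P0 \<in> pos_simplex" and "P1 \<in> pos_simplex"
    and "(P0, P1) \<in> markov_order Pstar"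
  shows "P1 \<in> (\<lambda>x. P0 + x) ` Qcone P0 Pstar"
proof -
  have psp: "\<forall>k. Pstar$k > 0" using assms(2) unfolding pos_simplex_def by auto
  have s0: "(\<Sum>k\<in>UNIV. P0$k) = 1" and s1: "(\<Sum>k\<in>UNIV. P1$k) = 1"
    using assms(3,4) unfolding pos_simplex_def by auto
  have Dle: "Dt t Pstar P1 \<le> Dt t Pstar P0" for t
    by (rule order_Dt[OF assms(2) assms(5)])
  define x where "x k = P0$k / Pstar$k" for k
  define x1 where "x1 k = P1$k / Pstar$k" for k
  define y where "y = P1 - P0"
  have ysum: "(\<Sum>k\<in>UNIV. y$k) = 0" unfolding y_def using s0 s1 by (simp add: sum_subtractf)
  have ycond: "\<forall>S. upcl x S \<longrightarrow> (\<Sum>k\<in>S. y$k) \<le> 0"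
  proof (intro allI impI)
    fix S assume uS: "upcl x S"
    show "(\<Sum>k\<in>S. y$k) \<le> 0"
    proof (cases "S = {}")
      case True thus ?thesis by simp
    next
      case False
      define v where "v = Min (x ` S)"
      have "v \<in> x ` S" unfolding v_def by (rule Min_in) (use False in auto)
      then obtain s where s: "s \<in> S" "x s = v" by auto
      have geS: "\<And>k. k \<in> S \<Longrightarrow> v \<le> x k" unfolding v_def by simp
      have gtS: "\<And>k. v < x k \<Longrightarrow> k \<in> S" using uS s unfolding upcl_def by auto
      have D0: "Dt v Pstar P0 = (\<Sum>k\<in>S. Pstar$k * (x k - v))"
      proof -
        have "Dt v Pstar P0 = (\<Sum>k\<in>UNIV. Pstar$k * max (x k - v) 0)"
          unfolding Dt_def x_def by simp
        also have "\<dots> = (\<Sum>k\<in>S. Pstar$k * max (x k - v) 0)"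
        proof (rule sym, rule sum.mono_neutral_left)
          show "\<forall>i\<in>UNIV - S. Pstar$i * max (x i - v) 0 = 0"
            using gtS by (force simp: max_def)
        qed auto
        also have "\<dots> = (\<Sum>k\<in>S. Pstar$k * (x k - v))"
        proof (rule sum.cong[OF refl])
          fix k assume "k \<in> S"
          hence "0 \<le> x k - v" using geS by simp
          thus "Pstar$k * max (x k - v) 0 = Pstar$k * (x k - v)" by (simp add: max_absorb1)
        qed
        finally show ?thesis .
      qed
      have D1: "Dt v Pstar P1 \<ge> (\<Sum>k\<in>S. Pstar$k * (x1 k - v))"
      proof -
        have "(\<Sum>k\<in>S. Pstar$k * (x1 k - v)) \<le> (\<Sum>k\<in>S. Pstar$k * max (x1 k - v) 0)"
          by (rule sum_mono, rule mult_left_mono) (use psp in \<open>auto simp: less_imp_le\<close>)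
        also have "\<dots> \<le> (\<Sum>k\<in>UNIV. Pstar$k * max (x1 k - v) 0)"
          by (rule sum_mono2) (use psp in \<open>auto simp: less_imp_le\<close>)
        also have "\<dots> = Dt v Pstar P1" unfolding Dt_def x1_def by simp
        finally show ?thesis .
      qed
      have "(\<Sum>k\<in>S. y$k) = (\<Sum>k\<in>S. Pstar$k * (x1 k - v)) - (\<Sum>k\<in>S. Pstar$k * (x k - v))"
        unfolding sum_subtractf[symmetric]
      proof (rule sum.cong[OF refl])
        fix k assume "k \<in> S"
        have "Pstar$k \<noteq> 0" using psp by (simp add: less_imp_neq[symmetric])
        thus "y$k = Pstar$k * (x1 k - v) - Pstar$k * (x k - v)"
          unfolding y_def x_def x1_def by (simp add: algebra_simps)
      qed
      also have "\<dots> \<le> Dt v Pstar P1 - Dt v Pstar P0" using D0 D1 by simp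
      also have "\<dots> \<le> 0" using Dle[of v] by simp
      finally show ?thesis .
    qed
  qed
  have "y \<in> Kc x" by (rule comb[OF ysum ycond])
  hence "y \<in> Qcone P0 Pstar" unfolding Qcone_Kc x_def .
  moreover have "P1 = P0 + y" unfolding y_def by simp
  ultimately show ?thesis by blast
qed


end
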